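(* (i) Let $L,L'$ be simplicial complexes and $\varphi_i,\varphi'_i: L\to L'$ simplicial maps for $i=1,\dots,m$. If $\varphi_i\sim\varphi'_i$ for each $i$, then $\mathrm{SD}(\varphi_1,\dots,\varphi_m)=\mathrm{SD}(\varphi'_1,\dots,\varphi'_m)$. (ii) Let $\varphi_i: L\to L'$ be simplicial maps for $i=1,\dots,m$. If $L$ or $L'$ is strongly collapsible, then $\mathrm{SD}(\varphi_1,\dots,\varphi_m)=0$.
   Context: Simplicial complexes are abstract simplicial complexes; simplicial maps send simplices to simplices. Simplicial maps $f,g: K\to K'$ are contiguous if $f(\sigma)\cup g(\sigma)$ is a simplex of $K'$ for every simplex $\sigma$ of $K$; $f\sim g$ (same contiguity class) if there is a finite chain $f=f_0,\dots,f_n=g$ of simplicial maps with consecutive ones contiguous. For simplicial maps $\varphi_1,\dots,\varphi_m: K\to K'$, the higher contiguity distance $\mathrm{SD}(\varphi_1,\dots,\varphi_m)$ is the least $n\ge0$ such that $K$ is a union of subcomplexes $K_0,\dots,K_n$ with $\varphi_i|_{K_k}\sim\varphi_j|_{K_k}$ for all $i,j\in\{1,\dots,m\}$ and $k=0,\dots,n$. A simplicial complex $L$ is strongly collapsible if it has the same strong homotopy type as a single vertex $v$, i.e. there are simplicial maps $f: L\to\{v\}$, $g:\{v\}\to L$ with $f\circ g\sim 1$ and $g\circ f\sim 1_L$. Complexes are assumed edge-path connected. *)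

theory Defs
  imports Main "HOL-Library.Extended_Nat"
begin

definition simplicial_complex :: "'a set set \<Rightarrow> bool" where
  "simplicial_complex K \<longleftrightarrow>
     (\<forall>\<sigma>\<in>K. finite \<sigma> \<and> \<sigma> \<noteq> {}) \<and>
     (\<forall>\<sigma>\<in>K. \<forall>\<tau>. \<tau> \<subseteq> \<sigma> \<and> \<tau> \<noteq> {} \<longrightarrow> \<tau> \<in> K)"

definition vertices :: "'a set set \<Rightarrow> 'a set" where
  "vertices K = \<Union>K"

definition edge_path_connected :: "'a set set \<Rightarrow> bool" where
  "edge_path_connected K \<longleftrightarrow>
     (\<forall>v\<in>vertices K. \<forall>w\<in>vertices K. (\<lambda>x y. {x, y} \<in> K)\<^sup>*\<^sup>* v w)"

definition subcomplex :: "'a set set \<Rightarrow> 'a set set \<Rightarrow> bool" where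
  "subcomplex L K \<longleftrightarrow> simplicial_complex L \<and> L \<subseteq> K"

text \<open>A simplicial map K -> K' (only its values on vertices of K matter).\<close>
definition simplicial_map :: "'a set set \<Rightarrow> 'b set set \<Rightarrow> ('a \<Rightarrow> 'b) \<Rightarrow> bool" where
  "simplicial_map K K' f \<longleftrightarrow> (\<forall>\<sigma>\<in>K. f ` \<sigma> \<in> K')"

definition contiguous :: "'a set set \<Rightarrow> 'b set set \<Rightarrow> ('a \<Rightarrow> 'b) \<Rightarrow> ('a \<Rightarrow> 'b) \<Rightarrow> bool" where
  "contiguous K K' f g \<longleftrightarrow> simplicial_map K K' f \<and> simplicial_map K K' g \<and>
     (\<forall>\<sigma>\<in>K. f ` \<sigma> \<union> g ` \<sigma> \<in> K')"

definition contiguity_class :: "'a set set \<Rightarrow> 'b set set \<Rightarrow> ('a \<Rightarrow> 'b) \<Rightarrow> ('a \<Rightarrow> 'b) \<Rightarrow> bool" where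
  "contiguity_class K K' f g \<longleftrightarrow> simplicial_map K K' f \<and> (contiguous K K')\<^sup>*\<^sup>* f g"

definition SD_cover :: "'a set set \<Rightarrow> 'b set set \<Rightarrow> nat \<Rightarrow> (nat \<Rightarrow> 'a \<Rightarrow> 'b) \<Rightarrow> nat \<Rightarrow> bool" where
  "SD_cover K K' m \<phi> n \<longleftrightarrow>
     (\<exists>Ks :: nat \<Rightarrow> 'a set set.
        (\<forall>k\<le>n. subcomplex (Ks k) K) \<and> K = (\<Union>k\<le>n. Ks k) \<and>
        (\<forall>i\<in>{1..m}. \<forall>j\<in>{1..m}. \<forall>k\<le>n. contiguity_class (Ks k) K' (\<phi> i) (\<phi> j)))"

definition SD :: "'a set set \<Rightarrow> 'b set set \<Rightarrow> nat \<Rightarrow> (nat \<Rightarrow> 'a \<Rightarrow> 'b) \<Rightarrow> enat" where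
  "SD K K' m \<phi> = (if \<exists>n. SD_cover K K' m \<phi> n then enat (LEAST n. SD_cover K K' m \<phi> n) else \<infinity>)"

text \<open>Strongly collapsible: same strong homotopy type as a single vertex complex {{v}}.\<close>
definition strongly_collapsible :: "'a set set \<Rightarrow> bool" where
  "strongly_collapsible L \<longleftrightarrow>
     (\<exists>(v::'a) (f::'a \<Rightarrow> 'a) (g::'a \<Rightarrow> 'a).
        simplicial_map L {{v}} f \<and> simplicial_map {{v}} L g \<and>
        contiguity_class {{v}} {{v}} (f \<circ> g) id \<and> contiguity_class L L (g \<circ> f) id)"

end

theory Submission
  imports Defs
begin

lemma contiguous_sym: "contiguous K K' f g = contiguous K K' g f"
  by (auto simp: contiguous_def Un_commute)

lemma rt_sym: "(contiguous K K')\<^sup>*\<^sup>* f g \<Longrightarrow> (contiguous K K')\<^sup>*\<^sup>* g f"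
proof (induction rule: rtranclp_induct)
  case (step y z)
  then show ?case by (metis contiguous_sym converse_rtranclp_into_rtranclp)
qed auto

lemma rt_simp: "(contiguous K K')\<^sup>*\<^sup>* f g \<Longrightarrow> simplicial_map K K' f \<Longrightarrow> simplicial_map K K' g"
  by (induction rule: rtranclp_induct) (auto simp: contiguous_def)

lemma cc_sym: "contiguity_class K K' f g \<Longrightarrow> contiguity_class K K' g f"
  unfolding contiguity_class_def using rt_sym rt_simp by metis

lemma cc_trans: "contiguity_class K K' f g \<Longrightarrow> contiguity_class K K' g h \<Longrightarrow> contiguity_class K K' f h"
  unfolding contiguity_class_def by auto

lemma rt_restrict: "(contiguous K K')\<^sup>*\<^sup>* f g \<Longrightarrow> K0 \<subseteq> K \<Longrightarrow> (contiguous K0 K')\<^sup>*\<^sup>* f g"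
proof (induction rule: rtranclp_induct)
  case (step y z)
  then have "contiguous K0 K' y z" by (auto simp: contiguous_def simplicial_map_def)
  then show ?case using step by auto
qed auto

lemma cc_restrict: "contiguity_class K K' f g \<Longrightarrow> K0 \<subseteq> K \<Longrightarrow> contiguity_class K0 K' f g"
  unfolding contiguity_class_def using rt_restrict by (auto simp: simplicial_map_def)

lemma rt_pre: "(contiguous L L)\<^sup>*\<^sup>* h h' \<Longrightarrow> simplicial_map L L' \<phi> \<Longrightarrow>
   (contiguous L L')\<^sup>*\<^sup>* (\<phi> \<circ> h) (\<phi> \<circ> h')"
proof (induction rule: rtranclp_induct)
  case (step y z)
  have "contiguous L L' (\<phi> \<circ> y) (\<phi> \<circ> z)"
    unfolding contiguous_def simplicial_map_def
  proof (intro conjI ballI)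
    fix \<sigma> assume s: "\<sigma> \<in> L"
    have y: "y ` \<sigma> \<in> L" "z ` \<sigma> \<in> L" "y ` \<sigma> \<union> z ` \<sigma> \<in> L"
      using step(2) s unfolding contiguous_def simplicial_map_def by auto
    have p: "\<forall>\<tau>\<in>L. \<phi> ` \<tau> \<in> L'" using step(4) unfolding simplicial_map_def by auto
    show "(\<phi> \<circ> y) ` \<sigma> \<in> L'" using p y(1) image_comp by metis
    show "(\<phi> \<circ> z) ` \<sigma> \<in> L'" using p y(2) image_comp by metis
    have "(\<phi> \<circ> y) ` \<sigma> \<union> (\<phi> \<circ> z) ` \<sigma> = \<phi> ` (y ` \<sigma> \<union> z ` \<sigma>)"
      by (simp add: image_Un image_comp)
    then show "(\<phi> \<circ> y) ` \<sigma> \<union> (\<phi> \<circ> z) ` \<sigma> \<in> L'" using p y(3) by simp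
  qed
  with step(3)[OF step(4)] show ?case by (meson rtranclp.rtrancl_into_rtrancl)
qed auto

lemma rt_post: "(contiguous L' L')\<^sup>*\<^sup>* h h' \<Longrightarrow> simplicial_map L L' \<phi> \<Longrightarrow>
   (contiguous L L')\<^sup>*\<^sup>* (h \<circ> \<phi>) (h' \<circ> \<phi>)"
proof (induction rule: rtranclp_induct)
  case (step y z)
  have "contiguous L L' (y \<circ> \<phi>) (z \<circ> \<phi>)"
    unfolding contiguous_def simplicial_map_def
  proof (intro conjI ballI)
    fix \<sigma> assume s: "\<sigma> \<in> L"
    have t: "\<phi> ` \<sigma> \<in> L'" using step(4) s unfolding simplicial_map_def by auto
    have y: "y ` (\<phi> ` \<sigma>) \<in> L'" "z ` (\<phi> ` \<sigma>) \<in> L'" "y ` (\<phi> ` \<sigma>) \<union> z ` (\<phi> ` \<sigma>) \<in> L'"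
      using step(2) t unfolding contiguous_def simplicial_map_def by auto
    show "(y \<circ> \<phi>) ` \<sigma> \<in> L'" using y(1) by (simp add: image_comp)
    show "(z \<circ> \<phi>) ` \<sigma> \<in> L'" using y(2) by (simp add: image_comp)
    show "(y \<circ> \<phi>) ` \<sigma> \<union> (z \<circ> \<phi>) ` \<sigma> \<in> L'" using y(3) by (simp add: image_comp)
  qed
  with step(3)[OF step(4)] show ?case by (meson rtranclp.rtrancl_into_rtrancl)
qed auto

lemma const_path:
  assumes "(\<lambda>x y. {x, y} \<in> L')\<^sup>*\<^sup>* a b" "{a} \<in> L'" "L \<noteq> {}" "simplicial_complex L"
    "simplicial_complex L'"
  shows "contiguity_class L L' (\<lambda>_. a) (\<lambda>_. b)"
  using assms(1)
proof (induction rule: rtranclp_induct)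
  case base
  have "\<forall>\<sigma>\<in>L. (\<lambda>_. a) ` \<sigma> \<in> L'"
  proof
    fix \<sigma> assume "\<sigma> \<in> L"
    then have "\<sigma> \<noteq> {}" using assms(4) unfolding simplicial_complex_def by blast
    then have "(\<lambda>_. a) ` \<sigma> = {a}" by (simp add: image_constant_conv)
    then show "(\<lambda>_. a) ` \<sigma> \<in> L'" using assms(2) by simp
  qed
  then show ?case unfolding contiguity_class_def simplicial_map_def by simp
next
  case (step y z)
  have cl: "\<And>\<sigma> \<tau>. \<sigma> \<in> L' \<Longrightarrow> \<tau> \<subseteq> \<sigma> \<Longrightarrow> \<tau> \<noteq> {} \<Longrightarrow> \<tau> \<in> L'"
    using assms(5) unfolding simplicial_complex_def by blast
  have y: "{y} \<in> L'" "{z} \<in> L'" using cl[OF step(2)] by auto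
  have "contiguous L L' (\<lambda>_. y) (\<lambda>_. z)"
    unfolding contiguous_def simplicial_map_def
  proof (intro conjI ballI)
    fix \<sigma> assume "\<sigma> \<in> L"
    then have ne: "\<sigma> \<noteq> {}" using assms(4) unfolding simplicial_complex_def by auto
    show "(\<lambda>_. y) ` \<sigma> \<in> L'" using ne y by (simp add: image_constant_conv)
    show "(\<lambda>_. z) ` \<sigma> \<in> L'" using ne y by (simp add: image_constant_conv)
    show "(\<lambda>_. y) ` \<sigma> \<union> (\<lambda>_. z) ` \<sigma> \<in> L'" using ne step(2) by (simp add: image_constant_conv insert_commute)
  qed
  then show ?case using step(3) unfolding contiguity_class_def
    by (meson rtranclp.rtrancl_into_rtrancl)
qed

theorem proposition3p5:
  fixes L :: "'a set set" and L' :: "'b set set" and m :: nat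
    and \<phi> \<phi>' :: "nat \<Rightarrow> 'a \<Rightarrow> 'b"
  assumes "simplicial_complex L" and "simplicial_complex L'"
    and "edge_path_connected L" and "edge_path_connected L'"
  shows "((\<forall>i\<in>{1..m}. simplicial_map L L' (\<phi> i) \<and> simplicial_map L L' (\<phi>' i) \<and>
            contiguity_class L L' (\<phi> i) (\<phi>' i))
          \<longrightarrow> SD L L' m \<phi> = SD L L' m \<phi>')
       \<and> ((\<forall>i\<in>{1..m}. simplicial_map L L' (\<phi> i)) \<and>
            (strongly_collapsible L \<or> strongly_collapsible L')
          \<longrightarrow> SD L L' m \<phi> = 0)"
proof (intro conjI impI)
  assume H: "\<forall>i\<in>{1..m}. simplicial_map L L' (\<phi> i) \<and> simplicial_map L L' (\<phi>' i) \<and>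
            contiguity_class L L' (\<phi> i) (\<phi>' i)"
  have "SD_cover L L' m \<phi> n = SD_cover L L' m \<phi>' n" for n
  proof
    assume "SD_cover L L' m \<phi> n"
    then obtain Ks where K: "\<forall>k\<le>n. subcomplex (Ks k) L" "L = (\<Union>k\<le>n. Ks k)"
      "\<forall>i\<in>{1..m}. \<forall>j\<in>{1..m}. \<forall>k\<le>n. contiguity_class (Ks k) L' (\<phi> i) (\<phi> j)"
      unfolding SD_cover_def by blast
    have "contiguity_class (Ks k) L' (\<phi>' i) (\<phi>' j)" if "i\<in>{1..m}" "j\<in>{1..m}" "k\<le>n" for i j k
    proof -
      have sub: "Ks k \<subseteq> L" using K(1) that unfolding subcomplex_def by auto
      have "contiguity_class (Ks k) L' (\<phi>' i) (\<phi> i)"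
        using cc_restrict[OF cc_sym sub] H that by blast
      moreover have "contiguity_class (Ks k) L' (\<phi> j) (\<phi>' j)"
        using cc_restrict[OF _ sub] H that by blast
      ultimately show ?thesis using K(3) that cc_trans by blast
    qed
    then show "SD_cover L L' m \<phi>' n" unfolding SD_cover_def using K by blast
  next
    assume "SD_cover L L' m \<phi>' n"
    then obtain Ks where K: "\<forall>k\<le>n. subcomplex (Ks k) L" "L = (\<Union>k\<le>n. Ks k)"
      "\<forall>i\<in>{1..m}. \<forall>j\<in>{1..m}. \<forall>k\<le>n. contiguity_class (Ks k) L' (\<phi>' i) (\<phi>' j)"
      unfolding SD_cover_def by blast
    have "contiguity_class (Ks k) L' (\<phi> i) (\<phi> j)" if "i\<in>{1..m}" "j\<in>{1..m}" "k\<le>n" for i j k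
    proof -
      have sub: "Ks k \<subseteq> L" using K(1) that unfolding subcomplex_def by auto
      have "contiguity_class (Ks k) L' (\<phi> i) (\<phi>' i)"
        using cc_restrict[OF _ sub] H that by blast
      moreover have "contiguity_class (Ks k) L' (\<phi>' j) (\<phi> j)"
        using cc_restrict[OF cc_sym sub] H that by blast
      ultimately show ?thesis using K(3) that cc_trans by blast
    qed
    then show "SD_cover L L' m \<phi> n" unfolding SD_cover_def using K by blast
  qed
  then have "SD_cover L L' m \<phi> = SD_cover L L' m \<phi>'" by (rule ext)
  then show "SD L L' m \<phi> = SD L L' m \<phi>'" unfolding SD_def by simp
next
  assume H: "(\<forall>i\<in>{1..m}. simplicial_map L L' (\<phi> i)) \<and>
            (strongly_collapsible L \<or> strongly_collapsible L')"
  have ne: "\<And>\<sigma>. \<sigma> \<in> L \<Longrightarrow> \<sigma> \<noteq> {}" using assms(1) unfolding simplicial_complex_def by auto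
  have ne': "\<And>\<sigma>. \<sigma> \<in> L' \<Longrightarrow> \<sigma> \<noteq> {}" using assms(2) unfolding simplicial_complex_def by auto
  obtain c where c: "\<And>i. i \<in> {1..m} \<Longrightarrow> contiguity_class L L' (\<phi> i) (\<lambda>_. c)"
  proof (cases "strongly_collapsible L")
    case True
    then obtain v :: 'a and f g where fg: "simplicial_map L {{v}} f" "simplicial_map {{v}} L g"
      "contiguity_class L L (g \<circ> f) id" using True unfolding strongly_collapsible_def by auto
    define w where "w = g v"
    have wL: "{w} \<in> L" using fg(2) unfolding simplicial_map_def w_def by auto
    have fv: "\<And>x. x \<in> vertices L \<Longrightarrow> f x = v"
    proof -
      fix x assume "x \<in> vertices L"
      then obtain \<sigma> where "\<sigma> \<in> L" "x \<in> \<sigma>" unfolding vertices_def by auto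
      then show "f x = v" using fg(1) unfolding simplicial_map_def by auto
    qed
    have Lne: "L \<noteq> {}" using wL by auto
    have pi: "contiguity_class L L' (\<phi> i) (\<lambda>_. \<phi> i w)" if i: "i \<in> {1..m}" for i
    proof -
      have s: "simplicial_map L L' (\<phi> i)" using H i by auto
      have "(contiguous L L')\<^sup>*\<^sup>* (\<phi> i \<circ> (g \<circ> f)) (\<phi> i \<circ> id)"
        using rt_pre[OF fg(3)[unfolded contiguity_class_def, THEN conjunct2] s] .
      then have r1: "(contiguous L L')\<^sup>*\<^sup>* (\<phi> i) (\<phi> i \<circ> (g \<circ> f))" using rt_sym by simp
      have wL': "{\<phi> i w} \<in> L'" using s wL unfolding simplicial_map_def by (metis image_empty image_insert)
      have eq: "(\<phi> i \<circ> (g \<circ> f)) ` \<sigma> = {\<phi> i w}" if "\<sigma> \<in> L" for \<sigma>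
      proof -
        have "\<sigma> \<subseteq> vertices L" using that unfolding vertices_def by auto
        then have "\<forall>x\<in>\<sigma>. (\<phi> i \<circ> (g \<circ> f)) x = \<phi> i w" using fv unfolding w_def by auto
        then have "(\<phi> i \<circ> (g \<circ> f)) ` \<sigma> = (\<lambda>_. \<phi> i w) ` \<sigma>" by (intro image_cong) auto
        then show ?thesis using ne[OF that] by (simp add: image_constant_conv)
      qed
      have "contiguous L L' (\<phi> i \<circ> (g \<circ> f)) (\<lambda>_. \<phi> i w)"
        unfolding contiguous_def simplicial_map_def using eq ne wL' by (auto simp: image_constant_conv)
      then show ?thesis using r1 s unfolding contiguity_class_def by auto
    qed
    have wv: "w \<in> vertices L" using wL unfolding vertices_def by auto
    show ?thesis
    proof (cases "m = 0")
      case True then show ?thesis using that by auto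
    next
      case False
      then have one: "1 \<in> {1..m}" by auto
      have "contiguity_class L L' (\<phi> i) (\<lambda>_. \<phi> 1 w)" if i: "i \<in> {1..m}" for i
      proof -
        have a: "{\<phi> i w} \<in> L'" "{\<phi> 1 w} \<in> L'" using H i one wL unfolding simplicial_map_def by (metis image_empty image_insert)+
        then have "\<phi> i w \<in> vertices L'" "\<phi> 1 w \<in> vertices L'" unfolding vertices_def by auto
        then have "(\<lambda>x y. {x, y} \<in> L')\<^sup>*\<^sup>* (\<phi> i w) (\<phi> 1 w)"
          using assms(4) unfolding edge_path_connected_def by blast
        then have "contiguity_class L L' (\<lambda>_. \<phi> i w) (\<lambda>_. \<phi> 1 w)"
          by (rule const_path[OF _ a(1) Lne assms(1,2)])
        then show ?thesis using cc_trans[OF pi[OF i]] by blast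
      qed
      then show ?thesis using that by blast
    qed
  next
    case False
    then have "strongly_collapsible L'" using H by auto
    then obtain v :: 'b and f g where fg: "simplicial_map L' {{v}} f" "simplicial_map {{v}} L' g"
      "contiguity_class L' L' (g \<circ> f) id" using \<open>strongly_collapsible L'\<close> unfolding strongly_collapsible_def by auto
    define w where "w = g v"
    have wL: "{w} \<in> L'" using fg(2) unfolding simplicial_map_def w_def by auto
    have pi: "contiguity_class L L' (\<phi> i) (\<lambda>_. w)" if i: "i \<in> {1..m}" for i
    proof -
      have s: "simplicial_map L L' (\<phi> i)" using H i by auto
      have "(contiguous L L')\<^sup>*\<^sup>* ((g \<circ> f) \<circ> \<phi> i) (id \<circ> \<phi> i)"
        using rt_post[OF fg(3)[unfolded contiguity_class_def, THEN conjunct2] s] .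
      then have r1: "(contiguous L L')\<^sup>*\<^sup>* (\<phi> i) ((g \<circ> f) \<circ> \<phi> i)" using rt_sym by simp
      have eq: "((g \<circ> f) \<circ> \<phi> i) ` \<sigma> = {w}" if "\<sigma> \<in> L" for \<sigma>
      proof -
        have "\<phi> i ` \<sigma> \<in> L'" using s that unfolding simplicial_map_def by auto
        then have "f ` \<phi> i ` \<sigma> = {v}" using fg(1) unfolding simplicial_map_def by auto
        then have "g ` f ` \<phi> i ` \<sigma> = {w}" unfolding w_def by auto
        then show ?thesis by (simp add: image_comp)
      qed
      have "contiguous L L' ((g \<circ> f) \<circ> \<phi> i) (\<lambda>_. w)"
        unfolding contiguous_def simplicial_map_def using eq ne wL by (auto simp: image_constant_conv)
      then show ?thesis using r1 s unfolding contiguity_class_def by auto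
    qed
    then show ?thesis using that by blast
  qed
  have cij: "contiguity_class L L' (\<phi> i) (\<phi> j)" if "i \<in> {1..m}" "j \<in> {1..m}" for i j
    using cc_trans[OF c[OF that(1)] cc_sym[OF c[OF that(2)]]] .
  have "SD_cover L L' m \<phi> 0"
    unfolding SD_cover_def
  proof (rule exI[of _ "\<lambda>_. L"], intro conjI)
    show "\<forall>k::nat\<le>0. subcomplex L L" using assms(1) by (simp add: subcomplex_def)
    show "L = (\<Union>k::nat\<le>0. L)" by simp
    show "\<forall>i\<in>{1..m}. \<forall>j\<in>{1..m}. \<forall>k::nat\<le>0. contiguity_class L L' (\<phi> i) (\<phi> j)"
      using cij by blast
  qed
  then show "SD L L' m \<phi> = 0" unfolding SD_def by (auto simp: zero_enat_def)
qed

end
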